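(* Let $\mathcal{E}=[\theta,u]$ be an interval effect algebra that generates its ordered linear space, has an order-determining set of states, and is unrestricted. An effect $a\in\mathcal{E}$ is repeatable if and only if $a=\theta$ or there exists $s\in\mathcal{S}(\mathcal{E})$ with $s(a)=1$.
   Context: Let $V$ be a real vector space with zero $\theta$ and $K\subseteq V$ a positive cone ($\mathbb{R}^+K\subseteq K$, $K+K\subseteq K$, $K\cap(-K)=\{\theta\}$), ordered by $x\le y$ iff $y-x\in K$. For $u\in K$, $u\ne\theta$, $\mathcal{E}=[\theta,u]=\{x\in K:x\le u\}$; for $a,b\in\mathcal{E}$, $a\perp b$ means $a+b\le u$. $\mathcal{E}$ generates $V$ means $K=\mathbb{R}^+\mathcal{E}$ and $V=K-K$. A state is $s\colon\mathcal{E}\to[0,1]$ with $s(u)=1$ and $s(a+b)=s(a)+s(b)$ whenever $a\perp b$; $\mathcal{S}(\mathcal{E})$ is the set of all states, assumed order-determining: $a\le b$ iff $s(a)\le s(b)$ for all $s$. Affine = preserves finite convex combinations. Unrestricted: every affine $f\colon\mathcal{S}(\mathcal{E})\to[0,1]$ is of the form $f(s)=s(c)$ for some $c\in\mathcal{E}$. A substate is $\lambda s$, $\lambda\in[0,1]$, $s\in\mathcal{S}(\mathcal{E})$. An operation on $\mathcal{E}$ is an affine map $\mathcal{I}$ from $\mathcal{S}(\mathcal{E})$ to substates on $\mathcal{E}$; its dual $\mathcal{I}^*\colon\mathcal{E}\to\mathcal{E}$ is the unique affine map with $s[\mathcal{I}^*(b)]=\mathcal{I}(s)(b)$ for all $s,b$.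 An effect $a$ is $\mathcal{I}$-repeatable if $\mathcal{I}^*(u)=a$ and $\mathcal{I}^*(a)=a$; $a$ is repeatable if it is $\mathcal{I}$-repeatable for some operation $\mathcal{I}$ on $\mathcal{E}$. *)

theory Defs
  imports Main "HOL.Real_Vector_Spaces"
begin

text \<open>States are real functions on V that are supported on the
effects (value 0 outside), so that pointwise convex combinations of states
are again states.\<close>

definition positive_cone :: "'v::real_vector set \<Rightarrow> bool" where
  "positive_cone K \<longleftrightarrow>
     (\<forall>r x. 0 \<le> r \<and> x \<in> K \<longrightarrow> r *\<^sub>R x \<in> K) \<and>
     (\<forall>x\<in>K. \<forall>y\<in>K. x + y \<in> K) \<and>
     K \<inter> uminus ` K = {0}"

definition cle :: "'v::real_vector set \<Rightarrow> 'v \<Rightarrow> 'v \<Rightarrow> bool" where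
  "cle K x y \<longleftrightarrow> y - x \<in> K"

definition effects :: "'v::real_vector set \<Rightarrow> 'v \<Rightarrow> 'v set" where
  "effects K u = {x \<in> K. cle K x u}"

definition generates :: "'v::real_vector set \<Rightarrow> 'v \<Rightarrow> bool" where
  "generates K u \<longleftrightarrow>
     K = {r *\<^sub>R e | r e. 0 \<le> r \<and> e \<in> effects K u} \<and>
     (\<forall>v. \<exists>x\<in>K. \<exists>y\<in>K. v = x - y)"

definition states :: "'v::real_vector set \<Rightarrow> 'v \<Rightarrow> ('v \<Rightarrow> real) set" where
  "states K u = {s.
     (\<forall>a\<in>effects K u. 0 \<le> s a \<and> s a \<le> 1) \<and> s u = 1 \<and>
     (\<forall>a\<in>effects K u. \<forall>b\<in>effects K u. cle K (a + b) u \<longrightarrow> s (a + b) = s a + s b) \<and>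
     (\<forall>x. x \<notin> effects K u \<longrightarrow> s x = 0)}"

definition order_determining :: "'v::real_vector set \<Rightarrow> 'v \<Rightarrow> bool" where
  "order_determining K u \<longleftrightarrow>
     (\<forall>a\<in>effects K u. \<forall>b\<in>effects K u.
        cle K a b \<longleftrightarrow> (\<forall>s\<in>states K u. s a \<le> s b))"

definition affine_fun_on :: "('v \<Rightarrow> real) set \<Rightarrow> (('v \<Rightarrow> real) \<Rightarrow> real) \<Rightarrow> bool" where
  "affine_fun_on S f \<longleftrightarrow>
     (\<forall>s\<in>S. \<forall>t\<in>S. \<forall>l::real. 0 \<le> l \<and> l \<le> 1 \<longrightarrow>
        f (\<lambda>x. l * s x + (1 - l) * t x) = l * f s + (1 - l) * f t)"

definition unrestricted :: "'v::real_vector set \<Rightarrow> 'v \<Rightarrow> bool" where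
  "unrestricted K u \<longleftrightarrow>
     (\<forall>f :: ('v \<Rightarrow> real) \<Rightarrow> real.
        (\<forall>s\<in>states K u. 0 \<le> f s \<and> f s \<le> 1) \<and> affine_fun_on (states K u) f \<longrightarrow>
        (\<exists>c\<in>effects K u. \<forall>s\<in>states K u. f s = s c))"

definition substates :: "'v::real_vector set \<Rightarrow> 'v \<Rightarrow> ('v \<Rightarrow> real) set" where
  "substates K u = {(\<lambda>x. l * s x) | l s. 0 \<le> l \<and> l \<le> 1 \<and> s \<in> states K u}"

definition operation :: "'v::real_vector set \<Rightarrow> 'v \<Rightarrow> (('v \<Rightarrow> real) \<Rightarrow> ('v \<Rightarrow> real)) \<Rightarrow> bool" where
  "operation K u I \<longleftrightarrow>
     (\<forall>s\<in>states K u. I s \<in> substates K u) \<and>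
     (\<forall>s\<in>states K u. \<forall>t\<in>states K u. \<forall>l::real. 0 \<le> l \<and> l \<le> 1 \<longrightarrow>
        I (\<lambda>x. l * s x + (1 - l) * t x) = (\<lambda>x. l * I s x + (1 - l) * I t x))"

definition is_dual :: "'v::real_vector set \<Rightarrow> 'v \<Rightarrow> (('v \<Rightarrow> real) \<Rightarrow> ('v \<Rightarrow> real)) \<Rightarrow> ('v \<Rightarrow> 'v) \<Rightarrow> bool" where
  "is_dual K u I D \<longleftrightarrow>
     (\<forall>b\<in>effects K u. D b \<in> effects K u) \<and>
     (\<forall>a\<in>effects K u. \<forall>b\<in>effects K u. \<forall>l::real. 0 \<le> l \<and> l \<le> 1 \<longrightarrow>
        D (l *\<^sub>R a + (1 - l) *\<^sub>R b) = l *\<^sub>R D a + (1 - l) *\<^sub>R D b) \<and>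
     (\<forall>s\<in>states K u. \<forall>b\<in>effects K u. s (D b) = I s b)"

definition repeatable :: "'v::real_vector set \<Rightarrow> 'v \<Rightarrow> 'v \<Rightarrow> bool" where
  "repeatable K u a \<longleftrightarrow>
     (\<exists>I D. operation K u I \<and> is_dual K u I D \<and> D u = a \<and> D a = a)"

end

theory Submission
  imports Defs Complex_Main
begin

lemma pc_scale: "positive_cone K \<Longrightarrow> 0 \<le> r \<Longrightarrow> x \<in> K \<Longrightarrow> r *\<^sub>R x \<in> K"
  unfolding positive_cone_def by blast

lemma pc_add: "positive_cone K \<Longrightarrow> x \<in> K \<Longrightarrow> y \<in> K \<Longrightarrow> x + y \<in> K"
  unfolding positive_cone_def by blast

lemma pc_zero: "positive_cone K \<Longrightarrow> u \<in> K \<Longrightarrow> 0 \<in> K"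
  using pc_scale[of K 0 u] by simp

lemma eff_iff: "x \<in> effects K u \<longleftrightarrow> x \<in> K \<and> u - x \<in> K"
  unfolding effects_def cle_def by simp

lemma zero_eff: "positive_cone K \<Longrightarrow> u \<in> K \<Longrightarrow> 0 \<in> effects K u"
  using pc_zero[of K u] eff_iff[of 0 K u] by simp

lemma u_eff: "positive_cone K \<Longrightarrow> u \<in> K \<Longrightarrow> u \<in> effects K u"
  using pc_zero[of K u] eff_iff[of u K u] by simp

lemma st_zero:
  assumes "positive_cone K" "u \<in> K" "s \<in> states K u"
  shows "s 0 = 0"
proof -
  have z: "0 \<in> effects K u" using zero_eff[OF assms(1,2)] .
  have "cle K (0 + 0) u" using z unfolding effects_def by simp
  then have "s (0 + 0) = s 0 + s 0"
    using assms(3) z unfolding states_def by blast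
  then show ?thesis by simp
qed

lemma st_mono:
  assumes pc: "positive_cone K" and uK: "u \<in> K" and s: "s \<in> states K u"
    and x: "x \<in> effects K u" and y: "y \<in> effects K u" and d: "y - x \<in> K"
  shows "s x \<le> s y"
proof -
  have yx: "y - x \<in> effects K u"
  proof -
    have "u - (y - x) = (u - y) + x" by simp
    then show ?thesis using x y d pc_add[OF pc] eff_iff by metis
  qed
  have "cle K (x + (y - x)) u" using y unfolding effects_def by simp
  then have "s (x + (y - x)) = s x + s (y - x)"
    using s x yx unfolding states_def by blast
  moreover have "0 \<le> s (y - x)" using s yx unfolding states_def by simp
  ultimately show ?thesis by simp
qed

lemma scale_eff:
  assumes pc: "positive_cone K" and x: "x \<in> effects K u" and r: "0 \<le> r" "r \<le> 1"
  shows "r *\<^sub>R x \<in> effects K u"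
proof -
  have "u - r *\<^sub>R x = (u - x) + (1 - r) *\<^sub>R x" by (simp add: algebra_simps)
  moreover have "(1 - r) *\<^sub>R x \<in> K" using pc_scale[OF pc, of "1 - r" x] x r unfolding eff_iff by simp
  ultimately show ?thesis using x eff_iff pc_scale[OF pc] pc_add[OF pc] r by metis
qed

lemma small_zero:
  fixes x :: real
  assumes "\<And>n::nat. n \<ge> 1 \<Longrightarrow> \<bar>x\<bar> \<le> 1 / real n"
  shows "x = 0"
proof (rule ccontr)
  assume "x \<noteq> 0"
  then have "\<bar>x\<bar> > 0" by simp
  then obtain n :: nat where n: "inverse (real n) < \<bar>x\<bar>" "n > 0"
    using ex_inverse_of_nat_less by blast
  have "\<bar>x\<bar> \<le> 1 / real n" using assms[of n] n by simp
  with n show False by (simp add: inverse_eq_divide)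
qed

lemma st_hom:
  assumes pc: "positive_cone K" and uK: "u \<in> K" and s: "s \<in> states K u"
    and x: "x \<in> effects K u" and r: "0 \<le> r" "r \<le> 1"
  shows "s (r *\<^sub>R x) = r * s x"
proof -
  define f where "f t = s (t *\<^sub>R x)" for t
  have add: "f (a + b) = f a + f b" if "0 \<le> a" "0 \<le> b" "a + b \<le> 1" for a b
  proof -
    have ea: "a *\<^sub>R x \<in> effects K u" using scale_eff[OF pc x] that by simp
    have eb: "b *\<^sub>R x \<in> effects K u" using scale_eff[OF pc x] that by simp
    have eab: "(a + b) *\<^sub>R x \<in> effects K u" using scale_eff[OF pc x] that by simp
    have "cle K (a *\<^sub>R x + b *\<^sub>R x) u" using eab unfolding effects_def
      by (simp add: scaleR_add_left)
    then show ?thesis using s ea eb unfolding states_def f_def by (simp add: scaleR_add_left)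
  qed
  have mono: "f a \<le> f b" if "0 \<le> a" "a \<le> b" "b \<le> 1" for a b
  proof -
    have "b *\<^sub>R x - a *\<^sub>R x = (b - a) *\<^sub>R x" by (simp add: algebra_simps)
    moreover have "(b - a) *\<^sub>R x \<in> K" using pc_scale[OF pc, of "b - a" x] that x unfolding eff_iff by simp
    ultimately show ?thesis unfolding f_def
      using st_mono[OF pc uK s] scale_eff[OF pc x] that by simp
  qed
  have f1: "f 1 = s x" unfolding f_def by simp
  have mult: "f (real k / real n) = real k * f (1 / real n)" if "k \<le> n" "n \<ge> 1" for k n :: nat
    using that
  proof (induction k)
    case 0
    then show ?case using st_zero[OF pc uK s] unfolding f_def by simp
  next
    case (Suc k)
    have "f (real (Suc k) / real n) = f (real k / real n + 1 / real n)"
      by (simp add: add_divide_distrib add.commute)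
    also have "\<dots> = f (real k / real n) + f (1 / real n)"
      using Suc.prems by (intro add) (auto simp: add_divide_distrib[symmetric] divide_le_eq_1)
    also have "\<dots> = real k * f (1 / real n) + f (1 / real n)" using Suc by simp
    also have "\<dots> = real (Suc k) * f (1 / real n)" by (simp add: distrib_right)
    finally show ?case .
  qed
  have kn: "f (real k / real n) = real k / real n * s x" if "k \<le> n" "n \<ge> 1" for k n :: nat
  proof -
    have "f 1 = real n * f (1 / real n)" using mult[of n n] that by simp
    then have "f (1 / real n) = s x / real n" using f1 that by (simp add: field_simps)
    then show ?thesis using mult[OF that] by simp
  qed
  have s01: "0 \<le> s x" "s x \<le> 1" using s x unfolding states_def by auto
  have "\<bar>f r - r * s x\<bar> \<le> 1 / real n" if n: "n \<ge> 1" for n :: nat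
  proof -
    define k where "k = nat \<lfloor>real n * r\<rfloor>"
    define k' where "k' = nat \<lceil>real n * r\<rceil>"
    have nr0: "0 \<le> real n * r" using r by simp
    have nrn: "real n * r \<le> real n" using r n by (simp add: mult_left_le)
    have k1: "real k \<le> real n * r" "real n * r < real k + 1" unfolding k_def using nr0
      by linarith+
    have k2: "real n * r \<le> real k'" "real k' < real n * r + 1" unfolding k'_def using nr0
      by linarith+
    have kle: "k \<le> n" using k1 nrn by linarith
    have k'le: "k' \<le> n" unfolding k'_def using nrn
      by (metis ceiling_le_iff nat_le_iff of_int_of_nat_eq)
    have npos: "real n > 0" using n by simp
    have lo: "f (real k / real n) \<le> f r"
    proof (intro mono)
      show "real k / real n \<le> r" using k1 npos by (simp add: divide_le_eq mult.commute)
    qed (use r in auto)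
    have hi: "f r \<le> f (real k' / real n)"
    proof (intro mono)
      show "r \<le> real k' / real n" using k2 npos by (simp add: le_divide_eq mult.commute)
      show "real k' / real n \<le> 1" using k'le npos by simp
    qed (use r in auto)
    have lo2: "real k / real n * s x \<ge> r * s x - 1 / real n"
    proof -
      have e: "r - 1 / real n = (real n * r - 1) / real n" using npos by (simp add: field_simps)
      have "(real n * r - 1) / real n \<le> real k / real n"
        using k1 npos by (intro divide_right_mono) auto
      then have "real k / real n \<ge> r - 1 / real n" using e by simp
      then have "real k / real n * s x \<ge> (r - 1 / real n) * s x"
        using s01 by (intro mult_right_mono) auto
      moreover have "(r - 1 / real n) * s x \<ge> r * s x - 1 / real n"
      proof -
        have "s x / real n \<le> 1 / real n" using s01 npos by (intro divide_right_mono) auto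
        then show ?thesis by (simp add: algebra_simps)
      qed
      ultimately show ?thesis by linarith
    qed
    have hi2: "real k' / real n * s x \<le> r * s x + 1 / real n"
    proof -
      have e: "r + 1 / real n = (real n * r + 1) / real n" using npos by (simp add: field_simps)
      have "real k' / real n \<le> (real n * r + 1) / real n"
        using k2 npos by (intro divide_right_mono) auto
      then have "real k' / real n \<le> r + 1 / real n" using e by simp
      then have "real k' / real n * s x \<le> (r + 1 / real n) * s x"
        using s01 by (intro mult_right_mono) auto
      moreover have "(r + 1 / real n) * s x \<le> r * s x + 1 / real n"
      proof -
        have "s x / real n \<le> 1 / real n" using s01 npos by (intro divide_right_mono) auto
        then show ?thesis by (simp add: algebra_simps)
      qed
      ultimately show ?thesis by linarith
    qed
    show ?thesis using lo hi lo2 hi2 kn[OF kle n] kn[OF k'le n] by linarith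
  qed
  then have "f r - r * s x = 0" by (intro small_zero)
  then show ?thesis unfolding f_def by simp
qed

lemma st_affine:
  assumes pc: "positive_cone K" and uK: "u \<in> K" and s: "s \<in> states K u"
    and x: "x \<in> effects K u" and y: "y \<in> effects K u" and l: "0 \<le> l" "l \<le> 1"
  shows "s (l *\<^sub>R x + (1 - l) *\<^sub>R y) = l * s x + (1 - l) * s y"
proof -
  have ex: "l *\<^sub>R x \<in> effects K u" using scale_eff[OF pc x] l by simp
  have ey: "(1 - l) *\<^sub>R y \<in> effects K u" using scale_eff[OF pc y] l by simp
  have "u - (l *\<^sub>R x + (1 - l) *\<^sub>R y) = l *\<^sub>R (u - x) + (1 - l) *\<^sub>R (u - y)"
    by (simp add: algebra_simps)
  moreover have "l *\<^sub>R (u - x) \<in> K" 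
    using pc_scale[OF pc, of l "u - x"] x l eff_iff by auto
  moreover have "(1 - l) *\<^sub>R (u - y) \<in> K"
    using pc_scale[OF pc, of "1 - l" "u - y"] y l eff_iff by auto
  ultimately have c: "cle K (l *\<^sub>R x + (1 - l) *\<^sub>R y) u"
    unfolding cle_def using pc_add[OF pc] by metis
  have "s (l *\<^sub>R x + (1 - l) *\<^sub>R y) = s (l *\<^sub>R x) + s ((1 - l) *\<^sub>R y)"
    using s ex ey c unfolding states_def by blast
  also have "\<dots> = l * s x + (1 - l) * s y"
    using st_hom[OF pc uK s x] st_hom[OF pc uK s y] l by simp
  finally show ?thesis .
qed

lemma pos_state:
  assumes pc: "positive_cone K" and uK: "u \<in> K" and od: "order_determining K u"
    and a: "a \<in> effects K u" and a0: "a \<noteq> 0"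
  shows "\<exists>s\<in>states K u. s a > 0"
proof (rule ccontr)
  assume "\<not> ?thesis"
  then have "\<forall>s\<in>states K u. s a \<le> s 0" using st_zero[OF pc uK] by (metis not_less)
  then have "cle K a 0" using od a zero_eff[OF pc uK] unfolding order_determining_def by blast
  then have "- a \<in> K" unfolding cle_def by simp
  then have "a \<in> uminus ` K" by force
  moreover have "a \<in> K" using a unfolding eff_iff by simp
  ultimately have "a \<in> K \<inter> uminus ` K" by simp
  then show False using pc a0 unfolding positive_cone_def by simp
qed

theorem corollary3p4:
  fixes K :: "'v::real_vector set" and u a :: 'v
  assumes "positive_cone K"
    and "u \<in> K" and "u \<noteq> 0"
    and "generates K u"
    and "order_determining K u"
    and "unrestricted K u"
    and "a \<in> effects K u"
  shows "repeatable K u a \<longleftrightarrow> a = 0 \<or> (\<exists>s\<in>states K u. s a = 1)"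
proof
  note pc = assms(1) and uK = assms(2) and od = assms(5) and a = assms(7)
  assume "repeatable K u a"
  then obtain I D where op: "operation K u I" and du: "is_dual K u I D"
    and Du: "D u = a" and Da: "D a = a" unfolding repeatable_def by blast
  show "a = 0 \<or> (\<exists>s\<in>states K u. s a = 1)"
  proof (cases "a = 0")
    case False
    then obtain s where s: "s \<in> states K u" and sa: "s a > 0"
      using pos_state[OF pc uK od a] by blast
    then have "I s \<in> substates K u" using op unfolding operation_def by blast
    then obtain l t where Is: "I s = (\<lambda>x. l * t x)" and t: "t \<in> states K u"
      unfolding substates_def by blast
    have "s a = I s u" using du s u_eff[OF pc uK] Du unfolding is_dual_def by metis
    then have sl: "s a = l" using Is t unfolding states_def by simp
    have "s a = I s a" using du s a Da unfolding is_dual_def by metis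
    then have "l * t a = l" using Is sl by simp
    then have "t a = 1" using sa sl by simp
    then show ?thesis using t by blast
  qed simp
next
  note pc = assms(1) and uK = assms(2) and od = assms(5) and a = assms(7)
  assume h: "a = 0 \<or> (\<exists>s\<in>states K u. s a = 1)"
  show "repeatable K u a"
  proof (cases "a = 0")
    case True
    have "\<exists>t. t \<in> states K u"
    proof (rule ccontr)
      assume "\<not> ?thesis"
      then have "cle K u 0" using od zero_eff[OF pc uK] u_eff[OF pc uK]
        unfolding order_determining_def by blast
      then have "- u \<in> K" unfolding cle_def by simp
      then have "u \<in> uminus ` K" by force
      then have "u \<in> K \<inter> uminus ` K" using uK by simp
      then show False using pc assms(3) unfolding positive_cone_def by simp
    qed
    then obtain t where t: "t \<in> states K u" by blast
    define I :: "('v \<Rightarrow> real) \<Rightarrow> ('v \<Rightarrow> real)" where "I = (\<lambda>s x. 0)"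
    define D :: "'v \<Rightarrow> 'v" where "D = (\<lambda>b. 0)"
    have "(\<lambda>x::'v. 0::real) = (\<lambda>x. 0 * t x)" by simp
    then have "(\<lambda>x::'v. 0::real) \<in> substates K u" unfolding substates_def using t by force
    then have "operation K u I" unfolding operation_def I_def by simp
    moreover have "is_dual K u I D" unfolding is_dual_def I_def D_def
      using zero_eff[OF pc uK] st_zero[OF pc uK] by simp
    ultimately show ?thesis unfolding repeatable_def using True D_def by blast
  next
    case False
    then obtain s0 where s0: "s0 \<in> states K u" and s0a: "s0 a = 1" using h by blast
    define I :: "('v \<Rightarrow> real) \<Rightarrow> ('v \<Rightarrow> real)" where "I = (\<lambda>s x. s a * s0 x)"
    define D :: "'v \<Rightarrow> 'v" where "D = (\<lambda>b. s0 b *\<^sub>R a)"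
    have "operation K u I" unfolding operation_def
    proof (intro conjI ballI allI impI)
      fix s assume s: "s \<in> states K u"
      then have "0 \<le> s a" "s a \<le> 1" using a unfolding states_def by auto
      then show "I s \<in> substates K u" unfolding substates_def I_def using s0 by blast
    next
      fix s t l assume "s \<in> states K u" "t \<in> states K u" "0 \<le> l \<and> l \<le> (1::real)"
      show "I (\<lambda>x. l * s x + (1 - l) * t x) = (\<lambda>x. l * I s x + (1 - l) * I t x)"
        unfolding I_def by (simp add: algebra_simps)
    qed
    moreover have "is_dual K u I D" unfolding is_dual_def
    proof (intro conjI ballI allI impI)
      fix b assume b: "b \<in> effects K u"
      then have "0 \<le> s0 b" "s0 b \<le> 1" using s0 unfolding states_def by auto
      then show "D b \<in> effects K u" unfolding D_def using scale_eff[OF pc a] by simp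
    next
      fix a' b l assume a': "a' \<in> effects K u" and b: "b \<in> effects K u"
        and l: "0 \<le> l \<and> l \<le> (1::real)"
      show "D (l *\<^sub>R a' + (1 - l) *\<^sub>R b) = l *\<^sub>R D a' + (1 - l) *\<^sub>R D b"
        unfolding D_def using st_affine[OF pc uK s0 a' b] l by (simp add: scaleR_add_left)
    next
      fix s b assume s: "s \<in> states K u" and b: "b \<in> effects K u"
      then have "0 \<le> s0 b" "s0 b \<le> 1" using s0 unfolding states_def by auto
      then show "s (D b) = I s b" unfolding D_def I_def using st_hom[OF pc uK s a] by simp
    qed
    moreover have "D u = a" unfolding D_def using s0 unfolding states_def by simp
    moreover have "D a = a" unfolding D_def using s0a by simp
    ultimately show ?thesis unfolding repeatable_def by blast
  qed
qed

end
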